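(* Let $0\le\rho\le\eta<1$, $m\in\mathbb{N}$, $n\in\mathbb{N}_0$, $m>n$. Let $f_m(z)=z-\sum_{k=2}^{\infty}|a_k|z^k+(-1)^{m-1}\sum_{k=1}^{\infty}|b_k|\overline{z}^k\in\overline{S}H(m,n,\eta)$ and $F_m(z)=z-\sum_{k=2}^{\infty}|A_k|z^k+(-1)^{m-1}\sum_{k=1}^{\infty}|B_k|\overline{z}^k\in\overline{S}H(m,n,\rho)$. Then the convolution $$(f_m*F_m)(z)=z-\sum_{k=2}^{\infty}|a_k||A_k|z^k+(-1)^{m-1}\sum_{k=1}^{\infty}|b_k||B_k|\overline{z}^k$$ belongs to $\overline{S}H(m,n,\eta)$, and $\overline{S}H(m,n,\eta)\subset\overline{S}H(m,n,\rho)$.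
   Context: Fix real parameters $\alpha,\beta,\gamma,\delta>0$ and $p,q>0$ with $q\le \alpha+p$. For an integer $m\ge 0$ define $C_1(m)=1$ and, for $k\ge 2$, $$C_k(m)=\frac{(m+1)_{k-1}}{(k-1)!}\cdot\frac{\Gamma(\gamma+q(k-1))/\Gamma(\gamma)}{\Gamma(\beta+\alpha(k-1))\,\Gamma(\delta+p(k-1))/\Gamma(\delta)},$$ where $(x)_j=\Gamma(x+j)/\Gamma(x)$. For analytic $\varphi(z)=\sum_{k\ge1}c_kz^k$ on $U=\{|z|<1\}$ set $\Phi^m\varphi(z)=\sum_{k\ge1}C_k(m)c_kz^k$, and for harmonic $f=h+\overline{g}$ set $\Phi^m f=\Phi^m h+(-1)^m\overline{\Phi^m g}$. For $0\le\eta<1$ the class $SH(m,n,\eta)$ consists of harmonic $f=h+\overline g$, univalent and sense-preserving in $U$, with $h(z)=z+\sum_{k\ge2}a_kz^k$, $g(z)=\sum_{k\ge1}b_kz^k$, $|b_1|<1$, and $\operatorname{Re}\bigl(\Phi^m f/\Phi^n f\bigr)>\eta$ in $U$. The class $\overline{S}H(m,n,\eta)$ consists of those $f_m=h+\overline{g_m}\in SH(m,n,\eta)$ with $h(z)=z-\sum_{k\ge2}a_kz^k$, $g_m(z)=(-1)^{m-1}\sum_{k\ge1}b_kz^k$, $a_k,b_k\ge0$. *)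

theory Defs
  imports "HOL-Analysis.Analysis"
begin

text \<open>Coefficient multipliers C_k(m) of the operator Phi^m, depending on the fixed
  real parameters alpha beta gamma delta p q. C_0 is irrelevant (set to 0), C_1 = 1.\<close>
definition Ccoef :: "real \<Rightarrow> real \<Rightarrow> real \<Rightarrow> real \<Rightarrow> real \<Rightarrow> real \<Rightarrow> nat \<Rightarrow> nat \<Rightarrow> real" where
  "Ccoef \<alpha> \<beta> \<gamma> \<delta> p q m k =
     (if k = 0 then 0 else if k = 1 then 1 else
       (pochhammer (real m + 1) (k - 1) / fact (k - 1)) *
       ((Gamma (\<gamma> + q * real (k - 1)) / Gamma \<gamma>) /
        (Gamma (\<beta> + \<alpha> * real (k - 1)) * (Gamma (\<delta> + p * real (k - 1)) / Gamma \<delta>))))"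

definition pser :: "(nat \<Rightarrow> complex) \<Rightarrow> complex \<Rightarrow> complex" where
  "pser c z = (\<Sum>k. c k * z ^ k)"

definition converges_in_disc :: "(nat \<Rightarrow> complex) \<Rightarrow> bool" where
  "converges_in_disc c \<longleftrightarrow> (\<forall>z \<in> ball 0 1. summable (\<lambda>k. c k * z ^ k))"

definition harm :: "(nat \<Rightarrow> complex) \<Rightarrow> (nat \<Rightarrow> complex) \<Rightarrow> complex \<Rightarrow> complex" where
  "harm A B z = pser A z + cnj (pser B z)"

definition PhiOp :: "real \<Rightarrow> real \<Rightarrow> real \<Rightarrow> real \<Rightarrow> real \<Rightarrow> real \<Rightarrow> nat \<Rightarrow>
    (nat \<Rightarrow> complex) \<Rightarrow> (nat \<Rightarrow> complex) \<Rightarrow> complex \<Rightarrow> complex" where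
  "PhiOp \<alpha> \<beta> \<gamma> \<delta> p q m A B z =
     pser (\<lambda>k. complex_of_real (Ccoef \<alpha> \<beta> \<gamma> \<delta> p q m k) * A k) z
     + (-1) ^ m * cnj (pser (\<lambda>k. complex_of_real (Ccoef \<alpha> \<beta> \<gamma> \<delta> p q m k) * B k) z)"

definition SH :: "real \<Rightarrow> real \<Rightarrow> real \<Rightarrow> real \<Rightarrow> real \<Rightarrow> real \<Rightarrow> nat \<Rightarrow> nat \<Rightarrow> real \<Rightarrow>
    (nat \<Rightarrow> complex) \<Rightarrow> (nat \<Rightarrow> complex) \<Rightarrow> bool" where
  "SH \<alpha> \<beta> \<gamma> \<delta> p q m n \<eta> A B \<longleftrightarrow>
     A 0 = 0 \<and> A 1 = 1 \<and> B 0 = 0 \<and> norm (B 1) < 1 \<and>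
     converges_in_disc A \<and> converges_in_disc B \<and>
     inj_on (harm A B) (ball 0 1) \<and>
     (\<forall>z \<in> ball 0 1. norm (deriv (pser B) z) < norm (deriv (pser A) z)) \<and>
     (\<forall>j \<in> {m, n}.
        converges_in_disc (\<lambda>k. complex_of_real (Ccoef \<alpha> \<beta> \<gamma> \<delta> p q j k) * A k) \<and>
        converges_in_disc (\<lambda>k. complex_of_real (Ccoef \<alpha> \<beta> \<gamma> \<delta> p q j k) * B k)) \<and>
     (\<forall>z \<in> ball 0 1 - {0}.
        Re (PhiOp \<alpha> \<beta> \<gamma> \<delta> p q m A B z / PhiOp \<alpha> \<beta> \<gamma> \<delta> p q n A B z) > \<eta>)"

text \<open>The class SHbar(m,n,eta): f_m = h + conj g_m with h = z - sum_{k>=2} a_k z^k,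
  g_m = (-1)^(m-1) sum_{k>=1} b_k z^k, a_k, b_k >= 0 (only a_k for k>=2 and b_k for k>=1 matter).\<close>
definition SHbar :: "real \<Rightarrow> real \<Rightarrow> real \<Rightarrow> real \<Rightarrow> real \<Rightarrow> real \<Rightarrow> nat \<Rightarrow> nat \<Rightarrow> real \<Rightarrow>
    (nat \<Rightarrow> real) \<Rightarrow> (nat \<Rightarrow> real) \<Rightarrow> bool" where
  "SHbar \<alpha> \<beta> \<gamma> \<delta> p q m n \<eta> a b \<longleftrightarrow>
     (\<forall>k\<ge>2. a k \<ge> 0) \<and> (\<forall>k\<ge>1. b k \<ge> 0) \<and>
     SH \<alpha> \<beta> \<gamma> \<delta> p q m n \<eta>
        (\<lambda>k. if k = 0 then 0 else if k = 1 then 1 else - complex_of_real (a k))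
        (\<lambda>k. if k = 0 then 0 else (-1) ^ (m - 1) * complex_of_real (b k))"

end

theory Submission
  imports Defs
begin


definition e1 :: "nat \<Rightarrow> real" where "e1 k = (if k = 1 then 1 else 0)"
definition a2 :: "(nat \<Rightarrow> real) \<Rightarrow> nat \<Rightarrow> real" where "a2 a k = (if k \<ge> 2 then a k else 0)"
definition b1 :: "(nat \<Rightarrow> real) \<Rightarrow> nat \<Rightarrow> real" where "b1 b k = (if k \<ge> 1 then b k else 0)"

lemma seqA: "(\<lambda>k. if k = 0 then 0 else if k = 1 then 1 else - complex_of_real (a k))
   = (\<lambda>k. complex_of_real (e1 k - a2 a k))"
  by (auto simp: e1_def a2_def)

lemma seqB: "(\<lambda>k. if k = 0 then 0 else (-1) ^ (m - 1) * complex_of_real (b k))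
   = (\<lambda>k. complex_of_real ((-1) ^ (m - 1) * b1 b k))"
  by (auto simp: b1_def)

lemma e1_sums: "(\<lambda>k. e1 k * t ^ k) sums t"
proof -
  have "(\<lambda>k. e1 k * t ^ k) = (\<lambda>k. if k = 1 then t ^ k else 0)" by (auto simp: e1_def)
  then show ?thesis using sums_single[of 1 "\<lambda>k. t ^ k"] by simp
qed

lemma diffs_e1: "diffs e1 n = (if n = 0 then 1 else 0)"
  by (simp add: diffs_def e1_def)

lemma diffs_e1_sums: "(\<lambda>n. diffs e1 n * t ^ n) sums 1"
proof -
  have "(\<lambda>n. diffs e1 n * t ^ n) = (\<lambda>n. if n = 0 then (\<lambda>_. 1) n else 0)" by (auto simp: diffs_e1)
  then show ?thesis using sums_single[of 0 "\<lambda>_. 1::real"] by simp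
qed

lemma realpt:
  fixes c :: "nat \<Rightarrow> real"
  assumes "converges_in_disc (\<lambda>k. complex_of_real (c k))" "\<bar>t\<bar> < 1"
  shows "summable (\<lambda>k. c k * t ^ k)"
    and "pser (\<lambda>k. complex_of_real (c k)) (complex_of_real t) = complex_of_real (\<Sum>k. c k * t ^ k)"
proof -
  have "summable (\<lambda>k. complex_of_real (c k) * complex_of_real t ^ k)"
    using assms unfolding converges_in_disc_def by auto
  then have s: "summable (\<lambda>k. complex_of_real (c k * t ^ k))" by simp
  then show "summable (\<lambda>k. c k * t ^ k)" using summable_of_real_iff by blast
  then show "pser (\<lambda>k. complex_of_real (c k)) (complex_of_real t) = complex_of_real (\<Sum>k. c k * t ^ k)"
    unfolding pser_def by (simp add: suminf_of_real)
qed

lemma deriv_cplx: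
  assumes "converges_in_disc c" "norm z < 1"
  shows "summable (\<lambda>n. diffs c n * z ^ n)" "deriv (pser c) z = (\<Sum>n. diffs c n * z ^ n)"
proof -
  have sm: "\<And>x. norm x < 1 \<Longrightarrow> summable (\<lambda>n. c n * x ^ n)"
    using assms unfolding converges_in_disc_def by auto
  show "summable (\<lambda>n. diffs c n * z ^ n)" by (rule termdiff_converges[OF assms(2) sm])
  define K :: complex where "K = of_real ((norm z + 1) / 2)"
  have K: "norm z < norm K" "norm K < 1" using assms(2) by (auto simp: K_def)
  have "DERIV (\<lambda>x. \<Sum>n. c n * x^n) z :> (\<Sum>n. diffs c n * z^n)"
    by (rule termdiffs_strong[OF sm[OF K(2)] K(1)])
  then show "deriv (pser c) z = (\<Sum>n. diffs c n * z ^ n)"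
    unfolding pser_def[abs_def] by (rule DERIV_imp_deriv)
qed

lemma diffs_of_real: "diffs (\<lambda>k. complex_of_real (c k)) = (\<lambda>n. complex_of_real (diffs c n))"
  by (simp add: diffs_def fun_eq_iff)

lemma realpt_deriv:
  fixes c :: "nat \<Rightarrow> real"
  assumes "converges_in_disc (\<lambda>k. complex_of_real (c k))" "\<bar>t\<bar> < 1"
  shows "summable (\<lambda>n. diffs c n * t ^ n)"
    and "deriv (pser (\<lambda>k. complex_of_real (c k))) (complex_of_real t) = complex_of_real (\<Sum>n. diffs c n * t ^ n)"
proof -
  have n: "norm (complex_of_real t) < 1" using assms by simp
  note d = deriv_cplx[OF assms(1) n, unfolded diffs_of_real]
  have s: "summable (\<lambda>k. complex_of_real (diffs c k * t ^ k))" using d(1) by simp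
  then show "summable (\<lambda>n. diffs c n * t ^ n)" using summable_of_real_iff by blast
  then show "deriv (pser (\<lambda>k. complex_of_real (c k))) (complex_of_real t) = complex_of_real (\<Sum>n. diffs c n * t ^ n)"
    using d(2) by (simp add: suminf_of_real)
qed

lemma isCont_real_powser:
  fixes c :: "nat \<Rightarrow> real"
  assumes "\<And>t. \<bar>t\<bar> < 1 \<Longrightarrow> summable (\<lambda>k. c k * t ^ k)" "\<bar>t\<bar> < 1"
  shows "isCont (\<lambda>t. \<Sum>k. c k * t ^ k) t"
proof -
  define K where "K = (\<bar>t\<bar> + 1) / 2"
  have "\<bar>K\<bar> < 1" "norm t < norm K" using assms(2) by (auto simp: K_def)
  then show ?thesis using isCont_powser[OF assms(1)] by blast
qed

lemma ivt_pos:
  fixes \<phi> :: "real \<Rightarrow> real"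
  assumes "\<And>t. 0 \<le> t \<Longrightarrow> t < 1 \<Longrightarrow> isCont \<phi> t" "\<phi> 0 > 0"
    "\<And>t. 0 \<le> t \<Longrightarrow> t < 1 \<Longrightarrow> \<phi> t \<noteq> 0" "0 \<le> t" "t < 1"
  shows "\<phi> t > 0"
proof (rule ccontr)
  assume "\<not> \<phi> t > 0"
  then have "\<phi> t \<le> 0" by simp
  then obtain x where "0 \<le> x" "x \<le> t" "\<phi> x = 0"
    using IVT2[of \<phi> t 0 0] assms by force
  then show False using assms(3)[of x] assms(5) by simp
qed

lemma pochhammer_mono_real:
  fixes x y :: real
  assumes "0 < x" "x \<le> y"
  shows "pochhammer x n \<le> pochhammer y n"
proof (induction n)
  case 0 then show ?case by simp
next
  case (Suc n)
  have "pochhammer x n * (x + of_nat n) \<le> pochhammer y n * (y + of_nat n)"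
    by (rule mult_mono) (use Suc assms pochhammer_pos[of y n] in auto)
  then show ?case by (simp add: pochhammer_Suc)
qed

lemma Ccoef_aux_pos:
  assumes "\<alpha> > 0" "\<beta> > 0" "\<gamma> > 0" "\<delta> > 0" "p > 0" "q > 0"
  shows "(Gamma (\<gamma> + q * real (k - 1)) / Gamma \<gamma>) /
        (Gamma (\<beta> + \<alpha> * real (k - 1)) * (Gamma (\<delta> + p * real (k - 1)) / Gamma \<delta>)) > 0"
proof -
  have "\<gamma> + q * real (k - 1) > 0" "\<beta> + \<alpha> * real (k - 1) > 0" "\<delta> + p * real (k - 1) > 0"
    using assms by (auto intro!: add_pos_nonneg)
  then have "Gamma (\<gamma> + q * real (k - 1)) > 0" "Gamma (\<beta> + \<alpha> * real (k - 1)) > 0"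
     "Gamma (\<delta> + p * real (k - 1)) > 0" "Gamma \<gamma> > 0" "Gamma \<delta> > 0" using assms by auto
  then show ?thesis by (intro divide_pos_pos mult_pos_pos) auto
qed

lemma Ccoef_nonneg:
  assumes "\<alpha> > 0" "\<beta> > 0" "\<gamma> > 0" "\<delta> > 0" "p > 0" "q > 0"
  shows "Ccoef \<alpha> \<beta> \<gamma> \<delta> p q m k \<ge> 0"
proof -
  have P: "pochhammer (real m + 1) (k - 1) \<ge> 0" by (rule pochhammer_nonneg) simp
  show ?thesis
    using mult_nonneg_nonneg[OF divide_nonneg_pos[OF P fact_gt_zero] less_imp_le[OF Ccoef_aux_pos[OF assms, of k]]]
    unfolding Ccoef_def by auto
qed

lemma Ccoef_mono:
  assumes "\<alpha> > 0" "\<beta> > 0" "\<gamma> > 0" "\<delta> > 0" "p > 0" "q > 0" "n \<le> m"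
  shows "Ccoef \<alpha> \<beta> \<gamma> \<delta> p q n k \<le> Ccoef \<alpha> \<beta> \<gamma> \<delta> p q m k"
proof -
  have P: "pochhammer (real n + 1) (k - 1) \<le> pochhammer (real m + 1) (k - 1)"
    by (rule pochhammer_mono_real) (use assms in auto)
  show ?thesis
    using mult_right_mono[OF divide_right_mono[OF P, of "fact (k - 1)"] less_imp_le[OF Ccoef_aux_pos[OF assms(1-6), of k]]]
    unfolding Ccoef_def by auto
qed

lemma Ccoef_1[simp]: "Ccoef \<alpha> \<beta> \<gamma> \<delta> p q m 1 = 1" "Ccoef \<alpha> \<beta> \<gamma> \<delta> p q m 0 = 0"
  by (simp_all add: Ccoef_def)


lemma sgn_sq: "(-1::real) ^ j * (-1) ^ j = 1"
  by (simp add: power_add[symmetric] flip: mult_2)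

lemma sgn_m: "1 \<le> m \<Longrightarrow> (-1::real) ^ m * (-1) ^ (m - 1) = -1"
  by (cases m) (auto simp: sgn_sq)

lemma abs_sgn: "\<bar>(-1::real) ^ j\<bar> = 1"
  by simp

lemma Ce1: "Ccoef \<alpha> \<beta> \<gamma> \<delta> p q m k * e1 k = e1 k"
  by (simp add: e1_def Ccoef_def)

lemma shift_pos:
  fixes d :: "nat \<Rightarrow> real"
  assumes sm: "\<And>t. \<bar>t\<bar> < 1 \<Longrightarrow> summable (\<lambda>k. d k * t ^ k)"
    and d0: "d 0 = 0" and d1: "d 1 > 0"
    and nz: "\<And>t. 0 < t \<Longrightarrow> t < 1 \<Longrightarrow> (\<Sum>k. d k * t ^ k) \<noteq> 0"
    and t: "0 < t" "t < 1"
  shows "(\<Sum>k. d k * t ^ k) > 0"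
proof -
  have eq: "(\<Sum>k. d k * x ^ k) = x * (\<Sum>k. d (Suc k) * x ^ k)"
   and sm': "summable (\<lambda>k. d (Suc k) * x ^ k)" if x: "\<bar>x\<bar> < 1" for x
  proof -
    have sS: "summable (\<lambda>k. d (Suc k) * x ^ (Suc k))"
      using sm[OF x] summable_Suc_iff[of "\<lambda>k. d k * x ^ k"] by blast
    show "summable (\<lambda>k. d (Suc k) * x ^ k)"
    proof (cases "x = 0")
      case True then show ?thesis by simp
    next
      case False
      have eqf: "(\<lambda>k. inverse x * (d (Suc k) * x ^ (Suc k))) = (\<lambda>k. d (Suc k) * x ^ k)"
        using False by (auto simp: fun_eq_iff)
      show ?thesis using summable_mult[OF sS, of "inverse x"] unfolding eqf .
    qed
    then have "(\<lambda>k. x * (d (Suc k) * x ^ k)) sums (x * (\<Sum>k. d (Suc k) * x ^ k))"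
      by (intro sums_mult summable_sums)
    then have "(\<lambda>k. d (Suc k) * x ^ (Suc k)) sums (x * (\<Sum>k. d (Suc k) * x ^ k))"
      by (simp add: ac_simps)
    then have "(\<lambda>k. d k * x ^ k) sums (x * (\<Sum>k. d (Suc k) * x ^ k) + d 0 * x ^ 0)"
      using sums_Suc_iff[of "\<lambda>k. d k * x ^ k"] by simp
    then show "(\<Sum>k. d k * x ^ k) = x * (\<Sum>k. d (Suc k) * x ^ k)"
      using d0 by (simp add: sums_iff)
  qed
  have "(\<Sum>k. d (Suc k) * t ^ k) > 0"
  proof (rule ivt_pos[where \<phi> = "\<lambda>x. \<Sum>k. d (Suc k) * x ^ k"])
    show "isCont (\<lambda>x. \<Sum>k. d (Suc k) * x ^ k) x" if "0 \<le> x" "x < 1" for x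
      by (rule isCont_real_powser) (use sm' that in auto)
    show "0 < (\<Sum>k. d (Suc k) * 0 ^ k)" using d1 by (simp add: powser_zero)
    show "(\<Sum>k. d (Suc k) * x ^ k) \<noteq> 0" if "0 \<le> x" "x < 1" for x
    proof (cases "x = 0")
      case True then show ?thesis using d1 by (simp add: powser_zero)
    next
      case False
      then show ?thesis using nz[of x] eq[of x] that by auto
    qed
  qed (use t in auto)
  then show ?thesis using eq[of t] t by auto
qed



lemma props:
  fixes a b :: "nat \<Rightarrow> real"
  assumes pos: "\<alpha> > 0" "\<beta> > 0" "\<gamma> > 0" "\<delta> > 0" "p > 0" "q > 0"
    and eta: "0 \<le> \<eta>" and m1: "m \<ge> 1"
    and S: "SHbar \<alpha> \<beta> \<gamma> \<delta> p q m n \<eta> a b"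
  shows "\<forall>k. a2 a k \<ge> 0" "\<forall>k. b1 b k \<ge> 0" "b 1 < 1"
    and "\<And>t. \<bar>t\<bar> < 1 \<Longrightarrow> summable (\<lambda>k. a2 a k * t ^ k)"
    and "\<And>t. \<bar>t\<bar> < 1 \<Longrightarrow> summable (\<lambda>k. b1 b k * t ^ k)"
    and "\<And>t j. \<bar>t\<bar> < 1 \<Longrightarrow> j \<in> {m, n} \<Longrightarrow> summable (\<lambda>k. Ccoef \<alpha> \<beta> \<gamma> \<delta> p q j k * a2 a k * t ^ k)"
    and "\<And>t j. \<bar>t\<bar> < 1 \<Longrightarrow> j \<in> {m, n} \<Longrightarrow> summable (\<lambda>k. Ccoef \<alpha> \<beta> \<gamma> \<delta> p q j k * b1 b k * t ^ k)"
    and "\<And>t. 0 \<le> t \<Longrightarrow> t < 1 \<Longrightarrow> summable (\<lambda>n. diffs (a2 a) n * t ^ n) \<and>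
            summable (\<lambda>n. diffs (b1 b) n * t ^ n) \<and>
            (\<Sum>n. diffs (a2 a) n * t ^ n) + (\<Sum>n. diffs (b1 b) n * t ^ n) < 1"
    and "\<And>t. 0 < t \<Longrightarrow> t < 1 \<Longrightarrow>
       (\<Sum>k. (Ccoef \<alpha> \<beta> \<gamma> \<delta> p q m k - \<eta> * Ccoef \<alpha> \<beta> \<gamma> \<delta> p q n k) * a2 a k * t ^ k)
     + (\<Sum>k. (Ccoef \<alpha> \<beta> \<gamma> \<delta> p q m k + (-1) ^ n * (-1) ^ (m - 1) * \<eta> * Ccoef \<alpha> \<beta> \<gamma> \<delta> p q n k) * b1 b k * t ^ k)
       < (1 - \<eta>) * t"
proof -
  define \<sigma> :: real where "\<sigma> = (-1) ^ (m - 1)"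
  define Aq where "Aq = (\<lambda>k. complex_of_real (e1 k - a2 a k))"
  define Bq where "Bq = (\<lambda>k. complex_of_real (\<sigma> * b1 b k))"
  have Sx: "SH \<alpha> \<beta> \<gamma> \<delta> p q m n \<eta> Aq Bq" "\<forall>k\<ge>2. a k \<ge> 0" "\<forall>k\<ge>1. b k \<ge> 0"
    using S unfolding SHbar_def seqA seqB Aq_def Bq_def \<sigma>_def by auto
  show nna: "\<forall>k. a2 a k \<ge> 0" and nnb: "\<forall>k. b1 b k \<ge> 0" using Sx by (auto simp: a2_def b1_def)
  have B1: "norm (Bq 1) < 1" using Sx(1) unfolding SH_def by blast
  have "norm (Bq 1) = b 1" using Sx(3) by (simp add: Bq_def b1_def \<sigma>_def norm_mult norm_power)
  with B1 show b1lt: "b 1 < 1" by simp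
  have convA: "converges_in_disc Aq" and convB: "converges_in_disc Bq"
    and sp: "\<forall>z \<in> ball 0 1. norm (deriv (pser Bq) z) < norm (deriv (pser Aq) z)"
    and cj: "\<And>j. j \<in> {m, n} \<Longrightarrow> converges_in_disc (\<lambda>k. complex_of_real (Ccoef \<alpha> \<beta> \<gamma> \<delta> p q j k) * Aq k) \<and>
        converges_in_disc (\<lambda>k. complex_of_real (Ccoef \<alpha> \<beta> \<gamma> \<delta> p q j k) * Bq k)"
    and re: "\<forall>z \<in> ball 0 1 - {0}. Re (PhiOp \<alpha> \<beta> \<gamma> \<delta> p q m Aq Bq z / PhiOp \<alpha> \<beta> \<gamma> \<delta> p q n Aq Bq z) > \<eta>"
    using Sx(1) unfolding SH_def by blast+
  have convA': "converges_in_disc (\<lambda>k. complex_of_real (e1 k - a2 a k))" using convA by (simp add: Aq_def)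
  have convB': "converges_in_disc (\<lambda>k. complex_of_real (\<sigma> * b1 b k))" using convB by (simp add: Bq_def)
  have cjA: "converges_in_disc (\<lambda>k. complex_of_real (Ccoef \<alpha> \<beta> \<gamma> \<delta> p q j k * (e1 k - a2 a k)))"
    and cjB: "converges_in_disc (\<lambda>k. complex_of_real (Ccoef \<alpha> \<beta> \<gamma> \<delta> p q j k * (\<sigma> * b1 b k)))"
    if "j \<in> {m, n}" for j
    using cj[OF that] by (simp_all add: Aq_def Bq_def)
  have sige: "\<sigma> * \<sigma> = 1" by (simp add: \<sigma>_def sgn_sq)
  have e1s: "summable (\<lambda>k. e1 k * t ^ k)" for t using e1_sums sums_summable by blast
  show sa2: "summable (\<lambda>k. a2 a k * t ^ k)" if "\<bar>t\<bar> < 1" for t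
  proof -
    have "summable (\<lambda>k. e1 k * t ^ k - (e1 k - a2 a k) * t ^ k)"
      using summable_diff[OF e1s realpt(1)[OF convA' that]] .
    then show ?thesis by (simp add: algebra_simps)
  qed
  show sb1: "summable (\<lambda>k. b1 b k * t ^ k)" if "\<bar>t\<bar> < 1" for t
  proof -
    have "summable (\<lambda>k. \<sigma> * ((\<sigma> * b1 b k) * t ^ k))"
      using summable_mult[OF realpt(1)[OF convB' that]] .
    then show ?thesis using sige by (simp add: mult.assoc[symmetric])
  qed
  show sCa: "summable (\<lambda>k. Ccoef \<alpha> \<beta> \<gamma> \<delta> p q j k * a2 a k * t ^ k)" if "\<bar>t\<bar> < 1" "j \<in> {m, n}" for t j
  proof -
    have "summable (\<lambda>k. e1 k * t ^ k - (Ccoef \<alpha> \<beta> \<gamma> \<delta> p q j k * (e1 k - a2 a k)) * t ^ k)"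
      using summable_diff[OF e1s realpt(1)[OF cjA[OF that(2)] that(1)]] .
    moreover have "(\<lambda>k. e1 k * t ^ k - (Ccoef \<alpha> \<beta> \<gamma> \<delta> p q j k * (e1 k - a2 a k)) * t ^ k)
       = (\<lambda>k. Ccoef \<alpha> \<beta> \<gamma> \<delta> p q j k * a2 a k * t ^ k)"
      by (auto simp: fun_eq_iff right_diff_distrib Ce1 left_diff_distrib)
    ultimately show ?thesis by simp
  qed
  show sCb: "summable (\<lambda>k. Ccoef \<alpha> \<beta> \<gamma> \<delta> p q j k * b1 b k * t ^ k)" if "\<bar>t\<bar> < 1" "j \<in> {m, n}" for t j
  proof -
    have "summable (\<lambda>k. \<sigma> * ((Ccoef \<alpha> \<beta> \<gamma> \<delta> p q j k * (\<sigma> * b1 b k)) * t ^ k))"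
      using summable_mult[OF realpt(1)[OF cjB[OF that(2)] that(1)]] .
    moreover have "(\<lambda>k. \<sigma> * ((Ccoef \<alpha> \<beta> \<gamma> \<delta> p q j k * (\<sigma> * b1 b k)) * t ^ k))
       = (\<lambda>k. Ccoef \<alpha> \<beta> \<gamma> \<delta> p q j k * b1 b k * t ^ k)"
    proof (rule ext)
      fix k
      have "\<sigma> * ((Ccoef \<alpha> \<beta> \<gamma> \<delta> p q j k * (\<sigma> * b1 b k)) * t ^ k)
          = (\<sigma> * \<sigma>) * (Ccoef \<alpha> \<beta> \<gamma> \<delta> p q j k * b1 b k * t ^ k)" by (simp only: ac_simps)
      then show "\<sigma> * ((Ccoef \<alpha> \<beta> \<gamma> \<delta> p q j k * (\<sigma> * b1 b k)) * t ^ k)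
          = Ccoef \<alpha> \<beta> \<gamma> \<delta> p q j k * b1 b k * t ^ k" using sige by simp
    qed
    ultimately show ?thesis by simp
  qed
  have dd: "diffs (\<lambda>k. e1 k - a2 a k) = (\<lambda>n. diffs e1 n - diffs (a2 a) n)"
    by (simp add: diffs_def fun_eq_iff algebra_simps)
  have ds: "diffs (\<lambda>k. \<sigma> * b1 b k) = (\<lambda>n. \<sigma> * diffs (b1 b) n)"
    by (simp add: diffs_def fun_eq_iff algebra_simps)
  have e1d: "summable (\<lambda>n. diffs e1 n * t ^ n)" for t using diffs_e1_sums sums_summable by blast
  have sda: "summable (\<lambda>n. diffs (a2 a) n * t ^ n)" if "\<bar>t\<bar> < 1" for t
  proof -
    have "summable (\<lambda>n. diffs e1 n * t ^ n - diffs (\<lambda>k. e1 k - a2 a k) n * t ^ n)"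
      using summable_diff[OF e1d realpt_deriv(1)[OF convA' that]] .
    then show ?thesis by (simp add: dd algebra_simps)
  qed
  have sdb: "summable (\<lambda>n. diffs (b1 b) n * t ^ n)" if "\<bar>t\<bar> < 1" for t
  proof -
    have "summable (\<lambda>n. \<sigma> * (diffs (\<lambda>k. \<sigma> * b1 b k) n * t ^ n))"
      using summable_mult[OF realpt_deriv(1)[OF convB' that]] .
    then show ?thesis using sige by (simp add: ds mult.assoc[symmetric])
  qed
  have psi_eq: "(\<Sum>n. diffs (\<lambda>k. e1 k - a2 a k) n * t ^ n) = 1 - (\<Sum>n. diffs (a2 a) n * t ^ n)"
    if "\<bar>t\<bar> < 1" for t
  proof -
    have "(\<lambda>n. diffs e1 n * t ^ n - diffs (a2 a) n * t ^ n) sums (1 - (\<Sum>n. diffs (a2 a) n * t ^ n))"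
      by (intro sums_diff diffs_e1_sums summable_sums sda that)
    then show ?thesis by (simp add: dd algebra_simps sums_iff)
  qed
  have sb_eq: "(\<Sum>n. diffs (\<lambda>k. \<sigma> * b1 b k) n * t ^ n) = \<sigma> * (\<Sum>n. diffs (b1 b) n * t ^ n)"
    if "\<bar>t\<bar> < 1" for t
    using suminf_mult[OF sdb[OF that], of \<sigma>] by (simp add: ds mult.assoc)
  define \<psi> where "\<psi> = (\<lambda>x. \<Sum>n. diffs (\<lambda>k. e1 k - a2 a k) n * x ^ n)"
  have psi_pos: "\<psi> t > 0" if "0 \<le> t" "t < 1" for t
  proof (rule ivt_pos[where \<phi> = \<psi>])
    show "isCont \<psi> x" if "0 \<le> x" "x < 1" for x
      unfolding \<psi>_def by (rule isCont_real_powser) (use realpt_deriv(1)[OF convA'] that in auto)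
    show "\<psi> 0 > 0" unfolding \<psi>_def by (simp add: powser_zero diffs_def e1_def a2_def)
    show "\<psi> x \<noteq> 0" if "0 \<le> x" "x < 1" for x
    proof -
      have x1: "\<bar>x\<bar> < 1" using that by auto
      have "norm (deriv (pser Bq) (complex_of_real x)) < norm (deriv (pser Aq) (complex_of_real x))"
        using sp x1 by auto
      then have "norm (deriv (pser Aq) (complex_of_real x)) > 0"
        by (meson le_less_trans norm_ge_zero)
      then show ?thesis
        using realpt_deriv(2)[OF convA' x1] by (simp add: \<psi>_def Aq_def)
    qed
  qed (use that in auto)
  show "summable (\<lambda>n. diffs (a2 a) n * t ^ n) \<and> summable (\<lambda>n. diffs (b1 b) n * t ^ n) \<and>
            (\<Sum>n. diffs (a2 a) n * t ^ n) + (\<Sum>n. diffs (b1 b) n * t ^ n) < 1" if "0 \<le> t" "t < 1" for t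
  proof -
    have t1: "\<bar>t\<bar> < 1" using that by auto
    have "norm (deriv (pser Bq) (complex_of_real t)) < norm (deriv (pser Aq) (complex_of_real t))"
      using sp t1 by auto
    then have "\<bar>\<sigma> * (\<Sum>n. diffs (b1 b) n * t ^ n)\<bar> < \<bar>\<psi> t\<bar>"
      using realpt_deriv(2)[OF convA' t1] realpt_deriv(2)[OF convB' t1] sb_eq[OF t1]
      by (simp add: \<psi>_def Aq_def Bq_def norm_mult abs_mult)
    moreover have "\<bar>\<sigma>\<bar> = 1" by (simp add: \<sigma>_def)
    moreover have "(\<Sum>n. diffs (b1 b) n * t ^ n) \<ge> 0"
      by (intro suminf_nonneg sdb t1) (use nnb that in \<open>auto simp: diffs_def\<close>)
    ultimately have "(\<Sum>n. diffs (b1 b) n * t ^ n) < \<psi> t"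
      using psi_pos[OF that] by (simp add: abs_mult)
    then show ?thesis using psi_eq[OF t1] sda[OF t1] sdb[OF t1] by (simp add: \<psi>_def)
  qed
  define Aj where "Aj = (\<lambda>j x. \<Sum>k. Ccoef \<alpha> \<beta> \<gamma> \<delta> p q j k * a2 a k * x ^ k)"
  define Bj where "Bj = (\<lambda>j x. \<Sum>k. Ccoef \<alpha> \<beta> \<gamma> \<delta> p q j k * b1 b k * x ^ k)"
  have phi_real: "PhiOp \<alpha> \<beta> \<gamma> \<delta> p q j Aq Bq (complex_of_real x)
     = complex_of_real (x - Aj j x + (-1) ^ j * \<sigma> * Bj j x)"
    and sumsD: "(\<lambda>k. (Ccoef \<alpha> \<beta> \<gamma> \<delta> p q j k * (e1 k - a2 a k) + (-1) ^ j * \<sigma> * (Ccoef \<alpha> \<beta> \<gamma> \<delta> p q j k * b1 b k)) * x ^ k)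
        sums (x - Aj j x + (-1) ^ j * \<sigma> * Bj j x)"
    if x: "\<bar>x\<bar> < 1" and j: "j \<in> {m, n}" for x j
  proof -
    have s1: "(\<lambda>k. e1 k * x ^ k - Ccoef \<alpha> \<beta> \<gamma> \<delta> p q j k * a2 a k * x ^ k) sums (x - Aj j x)"
      unfolding Aj_def by (intro sums_diff e1_sums summable_sums sCa x j)
    have f1: "(\<lambda>k. e1 k * x ^ k - Ccoef \<alpha> \<beta> \<gamma> \<delta> p q j k * a2 a k * x ^ k)
        = (\<lambda>k. Ccoef \<alpha> \<beta> \<gamma> \<delta> p q j k * (e1 k - a2 a k) * x ^ k)"
      by (auto simp: fun_eq_iff right_diff_distrib Ce1 left_diff_distrib)
    have s1': "(\<lambda>k. Ccoef \<alpha> \<beta> \<gamma> \<delta> p q j k * (e1 k - a2 a k) * x ^ k) sums (x - Aj j x)"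
      using s1 unfolding f1 .
    have s2: "(\<lambda>k. (-1) ^ j * \<sigma> * (Ccoef \<alpha> \<beta> \<gamma> \<delta> p q j k * b1 b k * x ^ k)) sums ((-1) ^ j * \<sigma> * Bj j x)"
      unfolding Bj_def by (intro sums_mult summable_sums sCb x j)
    show "(\<lambda>k. (Ccoef \<alpha> \<beta> \<gamma> \<delta> p q j k * (e1 k - a2 a k) + (-1) ^ j * \<sigma> * (Ccoef \<alpha> \<beta> \<gamma> \<delta> p q j k * b1 b k)) * x ^ k)
        sums (x - Aj j x + (-1) ^ j * \<sigma> * Bj j x)"
      using sums_add[OF s1' s2] by (simp add: algebra_simps)
    have pA: "pser (\<lambda>k. complex_of_real (Ccoef \<alpha> \<beta> \<gamma> \<delta> p q j k) * Aq k) (complex_of_real x)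
        = complex_of_real (x - Aj j x)"
    proof -
      have "(\<lambda>k. complex_of_real (Ccoef \<alpha> \<beta> \<gamma> \<delta> p q j k) * Aq k)
          = (\<lambda>k. complex_of_real (Ccoef \<alpha> \<beta> \<gamma> \<delta> p q j k * (e1 k - a2 a k)))"
        by (simp add: Aq_def)
      then show ?thesis using realpt(2)[OF cjA[OF j] x] s1' by (simp add: sums_iff)
    qed
    have pB: "pser (\<lambda>k. complex_of_real (Ccoef \<alpha> \<beta> \<gamma> \<delta> p q j k) * Bq k) (complex_of_real x)
        = complex_of_real (\<sigma> * Bj j x)"
    proof -
      have "(\<lambda>k. complex_of_real (Ccoef \<alpha> \<beta> \<gamma> \<delta> p q j k) * Bq k)
          = (\<lambda>k. complex_of_real (Ccoef \<alpha> \<beta> \<gamma> \<delta> p q j k * (\<sigma> * b1 b k)))"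
        by (simp add: Bq_def)
      moreover have "(\<Sum>k. Ccoef \<alpha> \<beta> \<gamma> \<delta> p q j k * (\<sigma> * b1 b k) * x ^ k) = \<sigma> * Bj j x"
        using suminf_mult[OF sCb[OF x j], of \<sigma>] unfolding Bj_def by (simp add: ac_simps)
      ultimately show ?thesis using realpt(2)[OF cjB[OF j] x] by simp
    qed
    show "PhiOp \<alpha> \<beta> \<gamma> \<delta> p q j Aq Bq (complex_of_real x)
       = complex_of_real (x - Aj j x + (-1) ^ j * \<sigma> * Bj j x)"
      unfolding PhiOp_def pA pB by simp
  qed
  show "(\<Sum>k. (Ccoef \<alpha> \<beta> \<gamma> \<delta> p q m k - \<eta> * Ccoef \<alpha> \<beta> \<gamma> \<delta> p q n k) * a2 a k * t ^ k)
     + (\<Sum>k. (Ccoef \<alpha> \<beta> \<gamma> \<delta> p q m k + (-1) ^ n * (-1) ^ (m - 1) * \<eta> * Ccoef \<alpha> \<beta> \<gamma> \<delta> p q n k) * b1 b k * t ^ k)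
       < (1 - \<eta>) * t" if t: "0 < t" "t < 1" for t
  proof -
    have t1: "\<bar>t\<bar> < 1" using t by auto
    define d where "d = (\<lambda>k. Ccoef \<alpha> \<beta> \<gamma> \<delta> p q n k * (e1 k - a2 a k) + (-1) ^ n * \<sigma> * (Ccoef \<alpha> \<beta> \<gamma> \<delta> p q n k * b1 b k))"
    have dsum: "(\<Sum>k. d k * x ^ k) = x - Aj n x + (-1) ^ n * \<sigma> * Bj n x" "summable (\<lambda>k. d k * x ^ k)"
      if "\<bar>x\<bar> < 1" for x
      using sumsD[OF that, of n] unfolding d_def by (auto simp: sums_iff)
    have Dpos: "(\<Sum>k. d k * t ^ k) > 0"
    proof (rule shift_pos)
      show "d 0 = 0" by (simp add: d_def)
      have "\<bar>(-1) ^ n * \<sigma>\<bar> = (1::real)" by (simp add: \<sigma>_def abs_mult)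
      moreover have "b 1 \<ge> 0" using Sx(3) by simp
      ultimately have ab: "\<bar>(-1) ^ n * \<sigma> * b 1\<bar> = b 1" by (simp add: abs_mult)
      have "- \<bar>(-1) ^ n * \<sigma> * b 1\<bar> \<le> (-1) ^ n * \<sigma> * b 1" by arith
      then have "(-1) ^ n * \<sigma> * b 1 \<ge> - b 1" using ab by simp
      then show "d 1 > 0" using b1lt by (simp add: d_def e1_def a2_def b1_def Ccoef_def)
      show "(\<Sum>k. d k * x ^ k) \<noteq> 0" if "0 < x" "x < 1" for x
      proof
        assume z: "(\<Sum>k. d k * x ^ k) = 0"
        have x1: "\<bar>x\<bar> < 1" using that by auto
        have P0: "PhiOp \<alpha> \<beta> \<gamma> \<delta> p q n Aq Bq (complex_of_real x) = 0"
          using phi_real[OF x1 insertI2[OF singletonI]] dsum[OF x1] z by (metis of_real_0)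
        have "complex_of_real x \<in> ball 0 1 - {0}" using that by auto
        then have "\<eta> < Re (PhiOp \<alpha> \<beta> \<gamma> \<delta> p q m Aq Bq (complex_of_real x) / PhiOp \<alpha> \<beta> \<gamma> \<delta> p q n Aq Bq (complex_of_real x))"
          using re by blast
        then show False using P0 eta by simp
      qed
    qed (use dsum t in auto)
    have "complex_of_real t \<in> ball 0 1 - {0}" using t by auto
    then have "Re (PhiOp \<alpha> \<beta> \<gamma> \<delta> p q m Aq Bq (complex_of_real t) / PhiOp \<alpha> \<beta> \<gamma> \<delta> p q n Aq Bq (complex_of_real t)) > \<eta>"
      using re by blast
    then have "(t - Aj m t + (-1) ^ m * \<sigma> * Bj m t) / (t - Aj n t + (-1) ^ n * \<sigma> * Bj n t) > \<eta>"
      unfolding phi_real[OF t1 insertI1] phi_real[OF t1 insertI2[OF singletonI]]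
      by (simp only: Re_complex_of_real flip: of_real_divide)
    moreover have "t - Aj n t + (-1) ^ n * \<sigma> * Bj n t > 0" using Dpos dsum[OF t1] by simp
    ultimately have ineq: "t - Aj m t + (-1) ^ m * \<sigma> * Bj m t > \<eta> * (t - Aj n t + (-1) ^ n * \<sigma> * Bj n t)"
      by (simp add: pos_less_divide_eq mult.commute)
    have sgm: "(-1) ^ m * \<sigma> = -1" using sgn_m[OF m1] by (simp add: \<sigma>_def)
    have e1: "(\<Sum>k. (Ccoef \<alpha> \<beta> \<gamma> \<delta> p q m k - \<eta> * Ccoef \<alpha> \<beta> \<gamma> \<delta> p q n k) * a2 a k * t ^ k)
       = Aj m t - \<eta> * Aj n t"
    proof -
      have "(\<lambda>k. Ccoef \<alpha> \<beta> \<gamma> \<delta> p q m k * a2 a k * t ^ k - \<eta> * (Ccoef \<alpha> \<beta> \<gamma> \<delta> p q n k * a2 a k * t ^ k))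
          sums (Aj m t - \<eta> * Aj n t)"
        unfolding Aj_def by (intro sums_diff sums_mult summable_sums sCa t1) auto
      then show ?thesis by (simp add: sums_iff algebra_simps)
    qed
    have e2: "(\<Sum>k. (Ccoef \<alpha> \<beta> \<gamma> \<delta> p q m k + (-1) ^ n * (-1) ^ (m - 1) * \<eta> * Ccoef \<alpha> \<beta> \<gamma> \<delta> p q n k) * b1 b k * t ^ k)
       = Bj m t + (-1) ^ n * \<sigma> * \<eta> * Bj n t"
    proof -
      have "(\<lambda>k. Ccoef \<alpha> \<beta> \<gamma> \<delta> p q m k * b1 b k * t ^ k + (-1) ^ n * \<sigma> * \<eta> * (Ccoef \<alpha> \<beta> \<gamma> \<delta> p q n k * b1 b k * t ^ k))
          sums (Bj m t + (-1) ^ n * \<sigma> * \<eta> * Bj n t)"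
        unfolding Bj_def by (intro sums_add sums_mult summable_sums sCb t1) auto
      then show ?thesis by (simp add: sums_iff algebra_simps \<sigma>_def)
    qed
    have hh: "(-1) ^ m * \<sigma> * Bj m t = - Bj m t" using sgm by simp
    show ?thesis unfolding e1 e2 using ineq hh by (simp add: algebra_simps)
  qed
qed



lemma cmp:
  fixes c d :: "nat \<Rightarrow> real" and z :: complex
  assumes "\<And>k. \<bar>c k\<bar> \<le> d k" "summable (\<lambda>k. d k * norm z ^ k)"
  shows "summable (\<lambda>k. complex_of_real (c k) * z ^ k)"
    and "norm (\<Sum>k. complex_of_real (c k) * z ^ k) \<le> (\<Sum>k. d k * norm z ^ k)"
proof -
  have b: "norm (complex_of_real (c k) * z ^ k) \<le> d k * norm z ^ k" for k
    using assms(1)[of k] by (simp add: norm_mult norm_power mult_right_mono)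
  show "summable (\<lambda>k. complex_of_real (c k) * z ^ k)"
    by (rule summable_comparison_test'[OF assms(2) b])
  show "norm (\<Sum>k. complex_of_real (c k) * z ^ k) \<le> (\<Sum>k. d k * norm z ^ k)"
    by (rule norm_suminf_le[OF b assms(2)])
qed

lemma e1c_sums: "(\<lambda>k. complex_of_real (e1 k) * z ^ k) sums z"
proof -
  have "(\<lambda>k. complex_of_real (e1 k) * z ^ k) = (\<lambda>k. if k = 1 then z ^ k else 0)" by (auto simp: e1_def)
  then show ?thesis using sums_single[of 1 "\<lambda>k. z ^ k"] by simp
qed

lemma diffs_shift:
  fixes c :: "nat \<Rightarrow> real"
  assumes "summable (\<lambda>n. diffs c n * r ^ n)"
  shows "(\<lambda>k. of_nat k * c k * r ^ (k - 1)) sums (\<Sum>n. diffs c n * r ^ n)"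
proof -
  have "(\<lambda>n. of_nat (Suc n) * c (Suc n) * r ^ (Suc n - 1)) sums (\<Sum>n. diffs c n * r ^ n)"
    using summable_sums[OF assms] by (simp add: diffs_def)
  then show ?thesis using sums_Suc_iff[of "\<lambda>k. of_nat k * c k * r ^ (k - 1)"] by simp
qed

lemma pow_diff_bound:
  fixes z w :: complex
  assumes "norm z \<le> r" "norm w \<le> r"
  shows "norm (z ^ k - w ^ k) \<le> of_nat k * r ^ (k - 1) * norm (z - w)"
proof -
  have r0: "0 \<le> r" using assms(1) norm_ge_zero order_trans by blast
  have "norm (\<Sum>i<k. w ^ (k - Suc i) * z ^ i) \<le> (\<Sum>i<k. norm (w ^ (k - Suc i) * z ^ i))"
    by (rule norm_sum)
  also have "\<dots> \<le> (\<Sum>i<k. r ^ (k - 1))"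
  proof (rule sum_mono)
    fix i assume i: "i \<in> {..<k}"
    have "norm (w ^ (k - Suc i) * z ^ i) \<le> r ^ (k - Suc i) * r ^ i"
      unfolding norm_mult norm_power
      by (intro mult_mono power_mono assms) (use r0 in auto)
    also have "\<dots> = r ^ (k - 1)" using i by (simp flip: power_add)
    finally show "norm (w ^ (k - Suc i) * z ^ i) \<le> r ^ (k - 1)" .
  qed
  finally have "norm (\<Sum>i<k. w ^ (k - Suc i) * z ^ i) \<le> of_nat k * r ^ (k - 1)" by simp
  then show ?thesis unfolding power_diff_sumr2[of z k w] norm_mult
    by (simp add: mult.commute mult_left_mono)
qed

lemma coef_le1:
  fixes c :: "nat \<Rightarrow> real"
  assumes nn: "\<And>k. c k \<ge> 0"
    and sp: "\<And>t. 0 \<le> t \<Longrightarrow> t < 1 \<Longrightarrow> summable (\<lambda>n. diffs c n * t ^ n) \<and> (\<Sum>n. diffs c n * t ^ n) < 1"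
    and k: "k \<ge> 1"
  shows "c k \<le> 1"
proof -
  define t :: real where "t = 1 - 1 / k"
  have t: "0 \<le> t" "t < 1" using k by (auto simp: t_def field_simps)
  have "diffs c (k - 1) * t ^ (k - 1) \<le> (\<Sum>n. diffs c n * t ^ n)"
    using sum_le_suminf[of "\<lambda>n. diffs c n * t ^ n" "{k - 1}"] sp[OF t] nn t
    by (auto simp: diffs_def)
  then have le: "of_nat k * c k * t ^ (k - 1) < 1" using sp[OF t] k by (simp add: diffs_def)
  have "1 + of_nat (k - 1) * (- 1 / k) \<le> (1 + (- 1 / k)) ^ (k - 1)"
    by (rule Bernoulli_inequality) (use k in auto)
  then have "1 / k \<le> t ^ (k - 1)" using k by (simp add: t_def of_nat_diff field_simps)
  then have "of_nat k * t ^ (k - 1) \<ge> 1" using k by (simp add: field_simps)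
  then have "c k * 1 \<le> c k * (of_nat k * t ^ (k - 1))" using nn[of k] by (intro mult_left_mono) auto
  then show ?thesis using le by (simp add: ac_simps)
qed

lemma re_crit:
  fixes U V :: complex and \<eta> :: real
  assumes "\<eta> < 1" "norm (U - V) < norm (U + of_real (1 - 2 * \<eta>) * V)"
  shows "Re (U / V) > \<eta>"
proof -
  have V: "V \<noteq> 0" using assms by auto
  define w where "w = U / V"
  have U: "U = w * V" using V by (simp add: w_def)
  have "norm (w - 1) * norm V < norm (w + of_real (1 - 2 * \<eta>)) * norm V"
    using assms(2) unfolding U by (simp add: algebra_simps flip: norm_mult)
  then have "norm (w - 1) < norm (w + of_real (1 - 2 * \<eta>))" using V by simp
  then have "norm (w - 1) ^ 2 < norm (w + of_real (1 - 2 * \<eta>)) ^ 2"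
    by (intro power_strict_mono) auto
  then have "(Re w - 1) ^ 2 + (Im w) ^ 2 < (Re w + (1 - 2 * \<eta>)) ^ 2 + (Im w) ^ 2"
    unfolding cmod_power2 by simp
  then have "0 < (2 - 2 * \<eta>) * (2 * Re w - 2 * \<eta>)"
    by (simp add: power2_eq_square algebra_simps)
  moreover have "2 - 2 * \<eta> > 0" using assms by simp
  ultimately have "2 * Re w - 2 * \<eta> > 0" using zero_less_mult_pos by blast
  then show ?thesis by (simp add: w_def)
qed



lemma lin2:
  fixes z :: "'a::{real_normed_field,banach}"
  assumes "summable (\<lambda>k. of_real (c k) * z ^ k)" "summable (\<lambda>k. of_real (d k) * z ^ k)"
  shows "summable (\<lambda>k. of_real (x * c k + y * d k) * z ^ k)"
    "(\<Sum>k. of_real (x * c k + y * d k) * z ^ k)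
       = of_real x * (\<Sum>k. of_real (c k) * z ^ k) + of_real y * (\<Sum>k. of_real (d k) * z ^ k)"
proof -
  have "(\<lambda>k. of_real x * (of_real (c k) * z ^ k) + of_real y * (of_real (d k) * z ^ k)) sums
     (of_real x * (\<Sum>k. of_real (c k) * z ^ k) + of_real y * (\<Sum>k. of_real (d k) * z ^ k))"
    by (intro sums_add sums_mult summable_sums assms)
  moreover have "(\<lambda>k. of_real x * (of_real (c k) * z ^ k) + of_real y * (of_real (d k) * z ^ k))
     = (\<lambda>k. of_real (x * c k + y * d k) * z ^ k)" by (simp add: fun_eq_iff algebra_simps)
  ultimately have s: "(\<lambda>k. of_real (x * c k + y * d k) * z ^ k) sums
     (of_real x * (\<Sum>k. of_real (c k) * z ^ k) + of_real y * (\<Sum>k. of_real (d k) * z ^ k))" by simp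
  then show "summable (\<lambda>k. of_real (x * c k + y * d k) * z ^ k)" by (rule sums_summable)
  show "(\<Sum>k. of_real (x * c k + y * d k) * z ^ k)
       = of_real x * (\<Sum>k. of_real (c k) * z ^ k) + of_real y * (\<Sum>k. of_real (d k) * z ^ k)"
    using s by (simp add: sums_iff)
qed

lemma lin2r:
  fixes t :: real
  assumes "summable (\<lambda>k. c k * t ^ k)" "summable (\<lambda>k. d k * t ^ k)"
  shows "summable (\<lambda>k. (x * c k + y * d k) * t ^ k)"
    "(\<Sum>k. (x * c k + y * d k) * t ^ k) = x * (\<Sum>k. c k * t ^ k) + y * (\<Sum>k. d k * t ^ k)"
  using lin2[of c t d x y] assms by simp_all

lemma conv_disc:
  fixes c d :: "nat \<Rightarrow> real"
  assumes "\<And>k. \<bar>c k\<bar> \<le> d k" "\<And>t. 0 \<le> t \<Longrightarrow> t < 1 \<Longrightarrow> summable (\<lambda>k. d k * t ^ k)"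
  shows "converges_in_disc (\<lambda>k. complex_of_real (c k))"
  unfolding converges_in_disc_def
proof
  fix z :: complex assume "z \<in> ball 0 1"
  then have "summable (\<lambda>k. d k * norm z ^ k)" using assms(2)[of "norm z"] by auto
  then show "summable (\<lambda>k. complex_of_real (c k) * z ^ k)" by (rule cmp(1)[of c d, OF assms(1)])
qed

lemma lip:
  fixes c c' :: "nat \<Rightarrow> real" and z1 z2 :: complex
  assumes c: "\<And>k. 0 \<le> c k" "\<And>k. c k \<le> c' k"
    and sd: "summable (\<lambda>n. diffs c' n * r ^ n)"
    and z: "norm z1 \<le> r" "norm z2 \<le> r"
    and s1: "summable (\<lambda>k. complex_of_real (c k) * z1 ^ k)"
    and s2: "summable (\<lambda>k. complex_of_real (c k) * z2 ^ k)"
  shows "norm ((\<Sum>k. complex_of_real (c k) * z1 ^ k) - (\<Sum>k. complex_of_real (c k) * z2 ^ k))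
     \<le> norm (z1 - z2) * (\<Sum>n. diffs c' n * r ^ n)"
proof -
  have eq: "(\<Sum>k. complex_of_real (c k) * z1 ^ k) - (\<Sum>k. complex_of_real (c k) * z2 ^ k)
     = (\<Sum>k. complex_of_real (c k) * (z1 ^ k - z2 ^ k))"
    using suminf_diff[OF s1 s2] by (simp add: algebra_simps)
  have g: "(\<lambda>k. norm (z1 - z2) * (of_nat k * c' k * r ^ (k - 1))) sums (norm (z1 - z2) * (\<Sum>n. diffs c' n * r ^ n))"
    by (intro sums_mult diffs_shift sd)
  have b: "norm (complex_of_real (c k) * (z1 ^ k - z2 ^ k)) \<le> norm (z1 - z2) * (of_nat k * c' k * r ^ (k - 1))" for k
  proof -
    have "norm (complex_of_real (c k) * (z1 ^ k - z2 ^ k)) = c k * norm (z1 ^ k - z2 ^ k)"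
      using c(1)[of k] by (simp add: norm_mult)
    also have "\<dots> \<le> c' k * (of_nat k * r ^ (k - 1) * norm (z1 - z2))"
      by (intro mult_mono c pow_diff_bound z) (use c(1)[of k] c(2)[of k] in auto)
    finally show ?thesis by (simp add: ac_simps)
  qed
  show ?thesis unfolding eq
    using norm_suminf_le[OF b sums_summable[OF g]] g by (simp add: sums_iff)
qed



lemma nn_comb: "\<bar>x\<bar> \<le> 1 \<Longrightarrow> 0 \<le> w2 \<Longrightarrow> w2 \<le> w1 \<Longrightarrow> 0 \<le> w1 + x * (w2::real)"
proof -
  assume h: "\<bar>x\<bar> \<le> 1" "0 \<le> w2" "w2 \<le> w1"
  have "\<bar>x * w2\<bar> \<le> w2" using h by (simp add: abs_mult mult_left_le_one_le)
  then show ?thesis using h by linarith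
qed

lemma diffs_e1c_sums: "(\<lambda>n. complex_of_real (diffs e1 n) * z ^ n) sums 1"
proof -
  have "(\<lambda>n. complex_of_real (diffs e1 n) * z ^ n) = (\<lambda>n. if n = 0 then (\<lambda>_. 1) n else 0)"
    by (auto simp: diffs_e1)
  then show ?thesis using sums_single[of 0 "\<lambda>_. 1::complex"] by simp
qed

lemma conv_main:
  fixes a b u v :: "nat \<Rightarrow> real"
  assumes pos: "\<alpha> > 0" "\<beta> > 0" "\<gamma> > 0" "\<delta> > 0" "p > 0" "q > 0"
    and eta: "0 \<le> \<eta>" "\<eta> < 1" and m1: "m \<ge> 1" and nm: "n \<le> m"
    and S: "SHbar \<alpha> \<beta> \<gamma> \<delta> p q m n \<eta> a b"
    and ua: "\<And>k. 0 \<le> a2 u k" "\<And>k. a2 u k \<le> a2 a k"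
    and vb: "\<And>k. 0 \<le> b1 v k" "\<And>k. b1 v k \<le> b1 b k"
  shows "SHbar \<alpha> \<beta> \<gamma> \<delta> p q m n \<eta> u v"
proof -
  define C where "C = Ccoef \<alpha> \<beta> \<gamma> \<delta> p q"
  note P = props[OF pos eta(1) m1 S, folded C_def]
  have nna: "\<And>k. 0 \<le> a2 a k" and nnb: "\<And>k. 0 \<le> b1 b k" using P(1,2) by auto
  have b1lt: "b 1 < 1" by (rule P(3))
  have sa2: "\<And>t. \<bar>t\<bar> < 1 \<Longrightarrow> summable (\<lambda>k. a2 a k * t ^ k)" by (rule P(4))
  have sb1: "\<And>t. \<bar>t\<bar> < 1 \<Longrightarrow> summable (\<lambda>k. b1 b k * t ^ k)" by (rule P(5))
  have sCa: "\<And>t j. \<bar>t\<bar> < 1 \<Longrightarrow> j \<in> {m, n} \<Longrightarrow> summable (\<lambda>k. C j k * a2 a k * t ^ k)" by (rule P(6))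
  have sCb: "\<And>t j. \<bar>t\<bar> < 1 \<Longrightarrow> j \<in> {m, n} \<Longrightarrow> summable (\<lambda>k. C j k * b1 b k * t ^ k)" by (rule P(7))
  have SP: "\<And>t. 0 \<le> t \<Longrightarrow> t < 1 \<Longrightarrow> summable (\<lambda>n. diffs (a2 a) n * t ^ n) \<and>
            summable (\<lambda>n. diffs (b1 b) n * t ^ n) \<and>
            (\<Sum>n. diffs (a2 a) n * t ^ n) + (\<Sum>n. diffs (b1 b) n * t ^ n) < 1" by (rule P(8))
  have KEY: "\<And>t. 0 < t \<Longrightarrow> t < 1 \<Longrightarrow>
       (\<Sum>k. (C m k - \<eta> * C n k) * a2 a k * t ^ k)
     + (\<Sum>k. (C m k + (-1) ^ n * (-1) ^ (m - 1) * \<eta> * C n k) * b1 b k * t ^ k)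
       < (1 - \<eta>) * t" by (rule P(9))
  have Cnn: "\<And>j k. 0 \<le> C j k" unfolding C_def by (rule Ccoef_nonneg[OF pos])
  have Cmono: "\<And>k. C n k \<le> C m k" unfolding C_def by (rule Ccoef_mono[OF pos nm])
  have CE: "\<And>j k. C j k * e1 k = e1 k" unfolding C_def by (rule Ce1)
  define \<sigma> :: real where "\<sigma> = (-1) ^ (m - 1)"
  have abss: "\<bar>\<sigma>\<bar> = 1" by (simp add: \<sigma>_def)
  have e1nn: "\<And>k. 0 \<le> e1 k" by (simp add: e1_def)
  have e1s: "\<And>t. summable (\<lambda>k. e1 k * t ^ k)" using e1_sums sums_summable by blast
  define Aq where "Aq = (\<lambda>k. complex_of_real (e1 k - a2 u k))"
  define Bq where "Bq = (\<lambda>k. complex_of_real (\<sigma> * b1 v k))"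
  define PS where "PS = (\<lambda>c z. \<Sum>k. complex_of_real (c k) * (z::complex) ^ k)"
  have cA: "converges_in_disc Aq" unfolding Aq_def
  proof (rule conv_disc[where d = "\<lambda>k. e1 k + a2 a k"])
    show "\<bar>e1 k - a2 u k\<bar> \<le> e1 k + a2 a k" for k using ua[of k] e1nn[of k] by auto
    show "summable (\<lambda>k. (e1 k + a2 a k) * t ^ k)" if "0 \<le> t" "t < 1" for t
      using summable_add[OF e1s sa2[of t]] that by (simp add: algebra_simps)
  qed
  have cB: "converges_in_disc Bq" unfolding Bq_def
  proof (rule conv_disc[where d = "b1 b"])
    show "\<bar>\<sigma> * b1 v k\<bar> \<le> b1 b k" for k using vb[of k] abss by (simp add: abs_mult)
    show "summable (\<lambda>k. b1 b k * t ^ k)" if "0 \<le> t" "t < 1" for t using sb1[of t] that by simp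
  qed
  have cjA: "converges_in_disc (\<lambda>k. complex_of_real (C j k) * Aq k)" if j: "j \<in> {m, n}" for j
  proof -
    have "converges_in_disc (\<lambda>k. complex_of_real (e1 k - C j k * a2 u k))"
    proof (rule conv_disc[where d = "\<lambda>k. e1 k + C j k * a2 a k"])
      show "\<bar>e1 k - C j k * a2 u k\<bar> \<le> e1 k + C j k * a2 a k" for k
        using e1nn[of k] mult_nonneg_nonneg[OF Cnn[of j k] ua(1)[of k]] mult_left_mono[OF ua(2)[of k] Cnn[of j k]] by arith
      show "summable (\<lambda>k. (e1 k + C j k * a2 a k) * t ^ k)" if "0 \<le> t" "t < 1" for t
        using summable_add[OF e1s sCa[of t j]] that j by (simp add: algebra_simps)
    qed
    moreover have "(\<lambda>k. complex_of_real (C j k) * Aq k) = (\<lambda>k. complex_of_real (e1 k - C j k * a2 u k))"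
      by (auto simp: fun_eq_iff Aq_def right_diff_distrib CE simp flip: of_real_mult)
    ultimately show ?thesis by simp
  qed
  have cjB: "converges_in_disc (\<lambda>k. complex_of_real (C j k) * Bq k)" if j: "j \<in> {m, n}" for j
  proof -
    have "converges_in_disc (\<lambda>k. complex_of_real (C j k * (\<sigma> * b1 v k)))"
    proof (rule conv_disc[where d = "\<lambda>k. C j k * b1 b k"])
      show "\<bar>C j k * (\<sigma> * b1 v k)\<bar> \<le> C j k * b1 b k" for k
        using vb[of k] abss Cnn[of j k] by (simp add: abs_mult mult_left_mono)
      show "summable (\<lambda>k. C j k * b1 b k * t ^ k)" if "0 \<le> t" "t < 1" for t
        using sCb[of t j] that j by simp
    qed
    then show ?thesis by (simp add: Bq_def)
  qed
  have sPa: "summable (\<lambda>k. complex_of_real (a2 u k) * z ^ k)" if "norm z < 1" for z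
    by (rule cmp(1)[where d = "a2 a"]) (use ua that sa2[of "norm z"] in auto)
  have sPb: "summable (\<lambda>k. complex_of_real (b1 v k) * z ^ k)" if "norm z < 1" for z
    by (rule cmp(1)[where d = "b1 b"]) (use vb that sb1[of "norm z"] in auto)
  have pA: "pser Aq z = z - PS (a2 u) z" if "norm z < 1" for z
  proof -
    have "(\<lambda>k. complex_of_real (e1 k) * z ^ k - complex_of_real (a2 u k) * z ^ k) sums (z - PS (a2 u) z)"
      unfolding PS_def by (intro sums_diff e1c_sums summable_sums sPa that)
    then show ?thesis by (simp add: pser_def Aq_def sums_iff algebra_simps)
  qed
  have pB: "pser Bq z = complex_of_real \<sigma> * PS (b1 v) z" if "norm z < 1" for z
  proof -
    have "(\<lambda>k. complex_of_real \<sigma> * (complex_of_real (b1 v k) * z ^ k)) sums (complex_of_real \<sigma> * PS (b1 v) z)"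
      unfolding PS_def by (intro sums_mult summable_sums sPb that)
    then show ?thesis by (simp add: pser_def Bq_def sums_iff algebra_simps)
  qed
  have inj: "inj_on (harm Aq Bq) (ball 0 1)"
  proof (rule inj_onI, rule ccontr)
    fix z1 z2 assume z1: "z1 \<in> ball 0 1" and z2: "z2 \<in> ball 0 1"
      and eq: "harm Aq Bq z1 = harm Aq Bq z2" and ne: "z1 \<noteq> z2"
    define r where "r = max (norm z1) (norm z2)"
    have r: "0 \<le> r" "r < 1" "norm z1 \<le> r" "norm z2 \<le> r" using z1 z2 norm_ge_zero[of z1] by (auto simp: r_def le_max_iff_disj)
    have n1: "norm z1 < 1" and n2: "norm z2 < 1" using z1 z2 by auto
    note spr = SP[OF r(1,2)]
    define Da where "Da = (\<Sum>n. diffs (a2 a) n * r ^ n)"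
    define Db where "Db = (\<Sum>n. diffs (b1 b) n * r ^ n)"
    have la: "norm (PS (a2 u) z1 - PS (a2 u) z2) \<le> norm (z1 - z2) * Da"
      unfolding PS_def Da_def by (rule lip) (use ua spr r sPa n1 n2 in auto)
    have lb: "norm (PS (b1 v) z1 - PS (b1 v) z2) \<le> norm (z1 - z2) * Db"
      unfolding PS_def Db_def by (rule lip) (use vb spr r sPb n1 n2 in auto)
    have "harm Aq Bq z1 - harm Aq Bq z2 = (z1 - z2) - (PS (a2 u) z1 - PS (a2 u) z2)
          + complex_of_real \<sigma> * cnj (PS (b1 v) z1 - PS (b1 v) z2)"
      unfolding harm_def pA[OF n1] pA[OF n2] pB[OF n1] pB[OF n2] by (simp add: algebra_simps)
    then have "(z1 - z2) = (PS (a2 u) z1 - PS (a2 u) z2) - complex_of_real \<sigma> * cnj (PS (b1 v) z1 - PS (b1 v) z2)"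
      using eq by (simp add: algebra_simps)
    then have "norm (z1 - z2) \<le> norm (PS (a2 u) z1 - PS (a2 u) z2) + norm (complex_of_real \<sigma> * cnj (PS (b1 v) z1 - PS (b1 v) z2))"
      by (metis norm_triangle_ineq4)
    also have "\<dots> = norm (PS (a2 u) z1 - PS (a2 u) z2) + norm (PS (b1 v) z1 - PS (b1 v) z2)"
      using abss by (simp add: norm_mult del: complex_cnj_diff)
    also have "\<dots> \<le> norm (z1 - z2) * (Da + Db)" using la lb by (simp add: algebra_simps)
    finally have "norm (z1 - z2) * 1 \<le> norm (z1 - z2) * (Da + Db)" by simp
    moreover have "Da + Db < 1" using spr by (simp add: Da_def Db_def)
    moreover have "norm (z1 - z2) > 0" using ne by simp
    ultimately show False by (simp add: mult_le_cancel_left)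
  qed
  have spz: "norm (deriv (pser Bq) z) < norm (deriv (pser Aq) z)" if z: "z \<in> ball 0 1" for z
  proof -
    have nz: "norm z < 1" using z by simp
    note spr = SP[OF norm_ge_zero nz]
    define Q where "Q = (\<Sum>n. complex_of_real (diffs (a2 u) n) * z ^ n)"
    have dle: "\<bar>diffs (a2 u) n\<bar> \<le> diffs (a2 a) n" for n
      using ua[of "Suc n"] by (simp add: diffs_def)
    have sQ: "summable (\<lambda>n. complex_of_real (diffs (a2 u) n) * z ^ n)"
      by (rule cmp(1)[OF dle]) (use spr in simp)
    have nQ: "norm Q \<le> (\<Sum>n. diffs (a2 a) n * norm z ^ n)"
      unfolding Q_def by (rule cmp(2)[OF dle]) (use spr in simp)
    have dAq: "diffs Aq = (\<lambda>n. complex_of_real (diffs e1 n) - complex_of_real (diffs (a2 u) n))"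
      by (simp add: diffs_def Aq_def fun_eq_iff algebra_simps)
    have "(\<lambda>n. complex_of_real (diffs e1 n) * z ^ n - complex_of_real (diffs (a2 u) n) * z ^ n) sums (1 - Q)"
      unfolding Q_def by (intro sums_diff diffs_e1c_sums summable_sums sQ)
    then have dA: "deriv (pser Aq) z = 1 - Q"
      unfolding deriv_cplx(2)[OF cA nz] dAq by (simp add: sums_iff algebra_simps)
    have "1 \<le> norm (1 - Q) + norm Q" using norm_triangle_ineq[of "1 - Q" Q] by simp
    then have nA: "norm (deriv (pser Aq) z) \<ge> 1 - (\<Sum>n. diffs (a2 a) n * norm z ^ n)"
      using dA nQ by simp
    have dBq: "diffs Bq = (\<lambda>n. complex_of_real (\<sigma> * diffs (b1 v) n))"
      by (simp add: diffs_def Bq_def fun_eq_iff algebra_simps)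
    have dle2: "\<bar>\<sigma> * diffs (b1 v) n\<bar> \<le> diffs (b1 b) n" for n
      using vb[of "Suc n"] abss by (simp add: diffs_def abs_mult)
    have nB: "norm (deriv (pser Bq) z) \<le> (\<Sum>n. diffs (b1 b) n * norm z ^ n)"
      unfolding deriv_cplx(2)[OF cB nz] dBq by (rule cmp(2)[OF dle2]) (use spr in simp)
    show ?thesis using nA nB spr by linarith
  qed
  have sumcmp: "summable (\<lambda>k. w k * t ^ k)"
    if "\<And>k. 0 \<le> w k" "\<And>k. w k \<le> w' k" "0 \<le> t" "summable (\<lambda>k. w' k * t ^ k)" for w w' :: "nat \<Rightarrow> real" and t
    by (rule summable_comparison_test'[OF that(4)]) (use that in \<open>auto intro!: mult_right_mono\<close>)
  have rez: "Re (PhiOp \<alpha> \<beta> \<gamma> \<delta> p q m Aq Bq z / PhiOp \<alpha> \<beta> \<gamma> \<delta> p q n Aq Bq z) > \<eta>"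
    if z: "z \<in> ball 0 1 - {0}" for z
  proof -
    have nz: "norm z < 1" and z0: "z \<noteq> 0" using z by auto
    define r where "r = norm z"
    have r: "0 < r" "r < 1" "\<bar>r\<bar> < 1" using nz z0 by (auto simp: r_def)
    define R where "R = (\<lambda>w. \<Sum>k. w k * r ^ k)"
    define am where "am = (\<lambda>k. C m k * a2 u k)"
    define an where "an = (\<lambda>k. C n k * a2 u k)"
    define bm where "bm = (\<lambda>k. C m k * b1 v k)"
    define bn where "bn = (\<lambda>k. C n k * b1 v k)"
    have jm: "m \<in> {m, n}" and jn: "n \<in> {m, n}" by auto
    have Caa: "\<bar>C j k * a2 u k\<bar> \<le> C j k * a2 a k" for j k
      using mult_nonneg_nonneg[OF Cnn[of j k] ua(1)[of k]] mult_left_mono[OF ua(2)[of k] Cnn[of j k]] by simp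
    have Cbb: "\<bar>C j k * b1 v k\<bar> \<le> C j k * b1 b k" for j k
      using mult_nonneg_nonneg[OF Cnn[of j k] vb(1)[of k]] mult_left_mono[OF vb(2)[of k] Cnn[of j k]] by simp
    have sXa: "summable (\<lambda>k. complex_of_real (C j k * a2 u k) * z ^ k)" if "j \<in> {m, n}" for j
      by (rule cmp(1)[where d = "\<lambda>k. C j k * a2 a k", OF Caa]) (use sCa[OF r(3) that] in \<open>simp add: r_def\<close>)
    have sXb: "summable (\<lambda>k. complex_of_real (C j k * b1 v k) * z ^ k)" if "j \<in> {m, n}" for j
      by (rule cmp(1)[where d = "\<lambda>k. C j k * b1 b k", OF Cbb]) (use sCb[OF r(3) that] in \<open>simp add: r_def\<close>)
    have sRa: "summable (\<lambda>k. (C j k * a2 u k) * r ^ k)" if "j \<in> {m, n}" for j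
      by (rule sumcmp[where w' = "\<lambda>k. C j k * a2 a k"])
         (use Caa sCa[OF r(3) that] r Cnn ua(1) in \<open>auto simp: abs_le_iff intro: mult_nonneg_nonneg\<close>)
    have sRb: "summable (\<lambda>k. (C j k * b1 v k) * r ^ k)" if "j \<in> {m, n}" for j
      by (rule sumcmp[where w' = "\<lambda>k. C j k * b1 b k"])
         (use Cbb sCb[OF r(3) that] r Cnn vb(1) in \<open>auto simp: abs_le_iff intro: mult_nonneg_nonneg\<close>)
    have pAj: "pser (\<lambda>k. complex_of_real (C j k) * Aq k) z = z - PS (\<lambda>k. C j k * a2 u k) z"
      if "j \<in> {m, n}" for j
    proof -
      have "(\<lambda>k. complex_of_real (e1 k) * z ^ k - complex_of_real (C j k * a2 u k) * z ^ k) sums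
          (z - PS (\<lambda>k. C j k * a2 u k) z)"
        unfolding PS_def by (intro sums_diff e1c_sums summable_sums sXa that)
      moreover have "(\<lambda>k. complex_of_real (e1 k) * z ^ k - complex_of_real (C j k * a2 u k) * z ^ k)
          = (\<lambda>k. complex_of_real (C j k) * Aq k * z ^ k)"
      proof -
        have pt: "complex_of_real (C j k) * Aq k = complex_of_real (e1 k) - complex_of_real (C j k * a2 u k)" for k
        proof -
          have h: "C j k * (e1 k - a2 u k) = e1 k - C j k * a2 u k" using CE[of j k] by (simp add: right_diff_distrib)
          show ?thesis unfolding Aq_def of_real_mult[symmetric] h by simp
        qed
        show ?thesis by (simp add: pt fun_eq_iff left_diff_distrib)
      qed
      ultimately show ?thesis by (simp add: pser_def sums_iff)
    qed
    have pBj: "pser (\<lambda>k. complex_of_real (C j k) * Bq k) z = complex_of_real \<sigma> * PS (\<lambda>k. C j k * b1 v k) z"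
      if "j \<in> {m, n}" for j
    proof -
      have "(\<lambda>k. complex_of_real \<sigma> * (complex_of_real (C j k * b1 v k) * z ^ k)) sums
          (complex_of_real \<sigma> * PS (\<lambda>k. C j k * b1 v k) z)"
        unfolding PS_def by (intro sums_mult summable_sums sXb that)
      then show ?thesis by (simp add: pser_def sums_iff Bq_def algebra_simps)
    qed
    define s where "s = (-1::real) ^ n * \<sigma>"
    define c where "c = 1 - 2 * \<eta>"
    have abs_s: "\<bar>s\<bar> = 1" by (simp add: s_def abss abs_mult)
    have abs_c: "\<bar>c\<bar> \<le> 1" using eta by (simp add: c_def)
    have sgm: "(-1) ^ m * complex_of_real \<sigma> = -1"
      using sgn_m[OF m1] unfolding \<sigma>_def by (metis of_real_1 of_real_minus of_real_mult of_real_neg_numeral of_real_power)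
    have U: "PhiOp \<alpha> \<beta> \<gamma> \<delta> p q m Aq Bq z = z - PS am z - cnj (PS bm z)"
    proof -
      have "PhiOp \<alpha> \<beta> \<gamma> \<delta> p q m Aq Bq z = z - PS am z + ((-1) ^ m * complex_of_real \<sigma>) * cnj (PS bm z)"
        unfolding PhiOp_def C_def[symmetric] pAj[OF jm] pBj[OF jm] am_def bm_def by simp
      then show ?thesis unfolding sgm by simp
    qed
    have V: "PhiOp \<alpha> \<beta> \<gamma> \<delta> p q n Aq Bq z = z - PS an z + complex_of_real s * cnj (PS bn z)"
      unfolding PhiOp_def C_def[symmetric] pAj[OF jn] pBj[OF jn] an_def bn_def s_def by simp
    have sam: "summable (\<lambda>k. complex_of_real (am k) * z ^ k)" using sXa[OF jm] by (simp add: am_def)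
    have san: "summable (\<lambda>k. complex_of_real (an k) * z ^ k)" using sXa[OF jn] by (simp add: an_def)
    have sbm: "summable (\<lambda>k. complex_of_real (bm k) * z ^ k)" using sXb[OF jm] by (simp add: bm_def)
    have sbn: "summable (\<lambda>k. complex_of_real (bn k) * z ^ k)" using sXb[OF jn] by (simp add: bn_def)
    have ram: "summable (\<lambda>k. am k * r ^ k)" using sRa[OF jm] by (simp add: am_def)
    have ran: "summable (\<lambda>k. an k * r ^ k)" using sRa[OF jn] by (simp add: an_def)
    have rbm: "summable (\<lambda>k. bm k * r ^ k)" using sRb[OF jm] by (simp add: bm_def)
    have rbn: "summable (\<lambda>k. bn k * r ^ k)" using sRb[OF jn] by (simp add: bn_def)
    define w1 where "w1 = (\<lambda>k. 1 * am k + (-1) * an k)"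
    define w2 where "w2 = (\<lambda>k. 1 * bm k + s * bn k)"
    define w3 where "w3 = (\<lambda>k. 1 * am k + c * an k)"
    define w4 where "w4 = (\<lambda>k. 1 * bm k + (- (c * s)) * bn k)"
    have anm: "0 \<le> an k" "an k \<le> am k" for k
      using Cmono[of k] ua(1)[of k] Cnn[of n k] by (auto simp: am_def an_def intro: mult_right_mono)
    have bnm: "0 \<le> bn k" "bn k \<le> bm k" for k
      using Cmono[of k] vb(1)[of k] Cnn[of n k] by (auto simp: bm_def bn_def intro: mult_right_mono)
    have w1n: "0 \<le> w1 k" for k unfolding w1_def using nn_comb[of "-1" "an k" "am k"] anm[of k] by simp
    have w2n: "0 \<le> w2 k" for k unfolding w2_def using nn_comb[of s "bn k" "bm k"] bnm[of k] abs_s by simp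
    have w3n: "0 \<le> w3 k" for k unfolding w3_def using nn_comb[of c "an k" "am k"] anm[of k] abs_c by simp
    have w4n: "0 \<le> w4 k" for k unfolding w4_def
      using nn_comb[of "- (c * s)" "bn k" "bm k"] bnm[of k] abs_c abs_s by (simp add: abs_mult)
    have nb: "norm (PS w z) \<le> R w" if "\<And>k. 0 \<le> w k" "summable (\<lambda>k. w k * r ^ k)" for w
      unfolding PS_def R_def r_def by (rule cmp(2)) (use that in \<open>auto simp: r_def\<close>)
    have e1: "PS am z - PS an z = PS w1 z"
      using lin2(2)[OF sam san, of 1 "-1"] unfolding PS_def w1_def by simp
    have e2: "PS bm z + complex_of_real s * PS bn z = PS w2 z"
      using lin2(2)[OF sbm sbn, of 1 s] unfolding PS_def w2_def by simp
    have e3: "PS am z + complex_of_real c * PS an z = PS w3 z"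
      using lin2(2)[OF sam san, of 1 c] unfolding PS_def w3_def by simp
    have e4: "PS bm z - complex_of_real (c * s) * PS bn z = PS w4 z"
      using lin2(2)[OF sbm sbn, of 1 "- (c * s)"] unfolding PS_def w4_def by simp
    have UV1: "PhiOp \<alpha> \<beta> \<gamma> \<delta> p q m Aq Bq z - PhiOp \<alpha> \<beta> \<gamma> \<delta> p q n Aq Bq z
        = - PS w1 z - cnj (PS w2 z)"
      unfolding U V e1[symmetric] e2[symmetric] by (simp add: algebra_simps)
    have UV2: "PhiOp \<alpha> \<beta> \<gamma> \<delta> p q m Aq Bq z + complex_of_real c * PhiOp \<alpha> \<beta> \<gamma> \<delta> p q n Aq Bq z
        = complex_of_real (1 + c) * z - PS w3 z - cnj (PS w4 z)"
      unfolding U V e3[symmetric] e4[symmetric] by (simp add: algebra_simps)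
    have rw1: "R w1 = R am - R an" using lin2r(2)[OF ram ran, of 1 "-1"] unfolding R_def w1_def by simp
    have rw2: "R w2 = R bm + s * R bn" using lin2r(2)[OF rbm rbn, of 1 s] unfolding R_def w2_def by simp
    have rw3: "R w3 = R am + c * R an" using lin2r(2)[OF ram ran, of 1 c] unfolding R_def w3_def by simp
    have rw4: "R w4 = R bm - c * s * R bn" using lin2r(2)[OF rbm rbn, of 1 "- (c * s)"] unfolding R_def w4_def by simp
    have sw: "summable (\<lambda>k. w1 k * r ^ k)" "summable (\<lambda>k. w2 k * r ^ k)"
      "summable (\<lambda>k. w3 k * r ^ k)" "summable (\<lambda>k. w4 k * r ^ k)"
      unfolding w1_def w2_def w3_def w4_def by (intro lin2r(1) ram ran rbm rbn)+
    have ka: "R am - \<eta> * R an \<le> (\<Sum>k. (C m k - \<eta> * C n k) * a2 a k * r ^ k)"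
    proof -
      have "R am - \<eta> * R an = (\<Sum>k. (1 * am k + (- \<eta>) * an k) * r ^ k)"
        using lin2r(2)[OF ram ran, of 1 "- \<eta>"] unfolding R_def by simp
      also have "\<dots> \<le> (\<Sum>k. (C m k - \<eta> * C n k) * a2 a k * r ^ k)"
      proof (rule suminf_le)
        show "summable (\<lambda>k. (1 * am k + (- \<eta>) * an k) * r ^ k)" by (intro lin2r(1) ram ran)
        have "summable (\<lambda>k. (1 * (C m k * a2 a k) + (- \<eta>) * (C n k * a2 a k)) * r ^ k)"
          by (intro lin2r(1) sCa r(3) jm jn)
        then show "summable (\<lambda>k. (C m k - \<eta> * C n k) * a2 a k * r ^ k)" by (simp add: algebra_simps)
        show "(1 * am k + (- \<eta>) * an k) * r ^ k \<le> (C m k - \<eta> * C n k) * a2 a k * r ^ k" for k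
        proof -
          have "0 \<le> C m k - \<eta> * C n k" using nn_comb[of "- \<eta>" "C n k" "C m k"] Cnn[of n k] Cmono[of k] eta by simp
          then have "(C m k - \<eta> * C n k) * a2 u k \<le> (C m k - \<eta> * C n k) * a2 a k"
            using ua(2)[of k] by (rule mult_left_mono[rotated])
          then have "(C m k - \<eta> * C n k) * a2 u k * r ^ k \<le> (C m k - \<eta> * C n k) * a2 a k * r ^ k"
            by (rule mult_right_mono) (use r in simp)
          then show ?thesis by (simp add: am_def an_def algebra_simps)
        qed
      qed
      finally show ?thesis .
    qed
    have kb: "R bm + s * \<eta> * R bn \<le> (\<Sum>k. (C m k + (-1) ^ n * (-1) ^ (m - 1) * \<eta> * C n k) * b1 b k * r ^ k)"
    proof -
      have "R bm + s * \<eta> * R bn = (\<Sum>k. (1 * bm k + (s * \<eta>) * bn k) * r ^ k)"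
        using lin2r(2)[OF rbm rbn, of 1 "s * \<eta>"] unfolding R_def by simp
      also have "\<dots> \<le> (\<Sum>k. (C m k + (-1) ^ n * (-1) ^ (m - 1) * \<eta> * C n k) * b1 b k * r ^ k)"
      proof (rule suminf_le)
        show "summable (\<lambda>k. (1 * bm k + (s * \<eta>) * bn k) * r ^ k)" by (intro lin2r(1) rbm rbn)
        have "summable (\<lambda>k. (1 * (C m k * b1 b k) + (s * \<eta>) * (C n k * b1 b k)) * r ^ k)"
          by (intro lin2r(1) sCb r(3) jm jn)
        then show "summable (\<lambda>k. (C m k + (-1) ^ n * (-1) ^ (m - 1) * \<eta> * C n k) * b1 b k * r ^ k)"
          by (simp add: algebra_simps s_def \<sigma>_def)
        show "(1 * bm k + (s * \<eta>) * bn k) * r ^ k \<le> (C m k + (-1) ^ n * (-1) ^ (m - 1) * \<eta> * C n k) * b1 b k * r ^ k" for k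
        proof -
          have ase: "\<bar>s * \<eta>\<bar> \<le> 1" using abs_s eta by (simp add: abs_mult)
          have "0 \<le> C m k + (s * \<eta>) * C n k" using nn_comb[OF ase, of "C n k" "C m k"] Cnn[of n k] Cmono[of k] by simp
          then have "(C m k + (s * \<eta>) * C n k) * b1 v k \<le> (C m k + (s * \<eta>) * C n k) * b1 b k"
            using vb(2)[of k] by (rule mult_left_mono[rotated])
          then have "(C m k + (s * \<eta>) * C n k) * b1 v k * r ^ k \<le> (C m k + (s * \<eta>) * C n k) * b1 b k * r ^ k"
            by (rule mult_right_mono) (use r in simp)
          then show ?thesis by (simp add: bm_def bn_def s_def \<sigma>_def algebra_simps)
        qed
      qed
      finally show ?thesis .
    qed
    have key: "R am - \<eta> * R an + (R bm + s * \<eta> * R bn) < (1 - \<eta>) * r"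
      using KEY[OF r(1,2)] ka kb by linarith
    have n1: "norm (PhiOp \<alpha> \<beta> \<gamma> \<delta> p q m Aq Bq z - PhiOp \<alpha> \<beta> \<gamma> \<delta> p q n Aq Bq z) \<le> R w1 + R w2"
    proof -
      have "norm (- PS w1 z - cnj (PS w2 z)) \<le> norm (PS w1 z) + norm (PS w2 z)"
        using norm_triangle_ineq4[of "- PS w1 z" "cnj (PS w2 z)"] by simp
      then show ?thesis unfolding UV1 using nb[OF w1n sw(1)] nb[OF w2n sw(2)] by linarith
    qed
    have n2: "norm (PhiOp \<alpha> \<beta> \<gamma> \<delta> p q m Aq Bq z + complex_of_real c * PhiOp \<alpha> \<beta> \<gamma> \<delta> p q n Aq Bq z)
        \<ge> (1 + c) * r - R w3 - R w4"
    proof -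
      have "norm (complex_of_real (1 + c) * z) \<le> norm (complex_of_real (1 + c) * z - PS w3 z - cnj (PS w4 z)) + norm (PS w3 z) + norm (PS w4 z)"
        using norm_triangle_ineq[of "complex_of_real (1 + c) * z - PS w3 z - cnj (PS w4 z)" "PS w3 z + cnj (PS w4 z)"]
          norm_triangle_ineq[of "PS w3 z" "cnj (PS w4 z)"] by (simp add: algebra_simps)
      moreover have "norm (complex_of_real (1 + c) * z) = (1 + c) * r"
      proof -
        have "norm (complex_of_real (1 + c) * z) = \<bar>1 + c\<bar> * r" by (simp only: norm_mult norm_of_real r_def)
        then show ?thesis using abs_c by simp
      qed
      ultimately show ?thesis unfolding UV2 using nb[OF w3n sw(3)] nb[OF w4n sw(4)] by linarith
    qed
    have "R w1 + R w2 + R w3 + R w4 = 2 * (R am - \<eta> * R an + (R bm + s * \<eta> * R bn))"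
      unfolding rw1 rw2 rw3 rw4 c_def by (simp add: algebra_simps)
    then have "norm (PhiOp \<alpha> \<beta> \<gamma> \<delta> p q m Aq Bq z - PhiOp \<alpha> \<beta> \<gamma> \<delta> p q n Aq Bq z)
        < norm (PhiOp \<alpha> \<beta> \<gamma> \<delta> p q m Aq Bq z + complex_of_real (1 - 2 * \<eta>) * PhiOp \<alpha> \<beta> \<gamma> \<delta> p q n Aq Bq z)"
      using n1 n2 key unfolding c_def by (simp add: algebra_simps)
    then show ?thesis by (rule re_crit[OF eta(2)])
  qed
  have A01: "Aq 0 = 0" "Aq 1 = 1" "Bq 0 = 0" by (simp_all add: Aq_def Bq_def e1_def a2_def b1_def)
  have "norm (Bq 1) = b1 v 1" using vb(1)[of 1] abss by (simp add: Bq_def norm_mult)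
  then have B1: "norm (Bq 1) < 1" using vb(2)[of 1] b1lt by (simp add: b1_def)
  have SHq: "SH \<alpha> \<beta> \<gamma> \<delta> p q m n \<eta> Aq Bq"
    unfolding SH_def C_def[symmetric] using A01 B1 cA cB inj spz cjA cjB rez by blast
  have nnu: "\<forall>k\<ge>2. 0 \<le> u k"
  proof (intro allI impI)
    fix k :: nat assume "2 \<le> k" then show "0 \<le> u k" using ua(1)[of k] by (simp add: a2_def)
  qed
  have nnv: "\<forall>k\<ge>1. 0 \<le> v k"
  proof (intro allI impI)
    fix k :: nat assume "1 \<le> k" then show "0 \<le> v k" using vb(1)[of k] by (simp add: b1_def)
  qed
  show ?thesis unfolding SHbar_def seqA seqB
    using nnu nnv SHq[unfolded Aq_def Bq_def \<sigma>_def] by blast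
qed



lemma le1_from_props:
  assumes pos: "\<alpha> > 0" "\<beta> > 0" "\<gamma> > 0" "\<delta> > 0" "p > 0" "q > 0"
    and eta: "0 \<le> \<rho>" and m1: "m \<ge> 1"
    and S: "SHbar \<alpha> \<beta> \<gamma> \<delta> p q m n \<rho> A B"
  shows "\<And>k. 0 \<le> a2 A k \<and> a2 A k \<le> 1" "\<And>k. 0 \<le> b1 B k \<and> b1 B k \<le> 1"
proof -
  note P = props[OF pos eta m1 S]
  have nnA: "\<And>k. 0 \<le> a2 A k" and nnB: "\<And>k. 0 \<le> b1 B k" using P(1,2) by auto
  have pa: "0 \<le> (\<Sum>n. diffs (a2 A) n * t ^ n)" "0 \<le> (\<Sum>n. diffs (b1 B) n * t ^ n)" if "0 \<le> t" "t < 1" for t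
    using P(8)[OF that] nnA nnB that by (auto intro!: suminf_nonneg simp: diffs_def)
  have spA: "summable (\<lambda>n. diffs (a2 A) n * t ^ n) \<and> (\<Sum>n. diffs (a2 A) n * t ^ n) < 1"
    if "0 \<le> t" "t < 1" for t
  proof -
    have h: "summable (\<lambda>n. diffs (a2 A) n * t ^ n)"
      "(\<Sum>n. diffs (a2 A) n * t ^ n) + (\<Sum>n. diffs (b1 B) n * t ^ n) < 1"
      using P(8)[OF that] by blast+
    then show ?thesis using pa(2)[OF that] by linarith
  qed
  have spB: "summable (\<lambda>n. diffs (b1 B) n * t ^ n) \<and> (\<Sum>n. diffs (b1 B) n * t ^ n) < 1"
    if "0 \<le> t" "t < 1" for t
  proof -
    have h: "summable (\<lambda>n. diffs (b1 B) n * t ^ n)"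
      "(\<Sum>n. diffs (a2 A) n * t ^ n) + (\<Sum>n. diffs (b1 B) n * t ^ n) < 1"
      using P(8)[OF that] by blast+
    then show ?thesis using pa(1)[OF that] by linarith
  qed
  have la: "a2 A k \<le> 1" if "k \<ge> 1" for k
    by (rule coef_le1[OF nnA spA that])
  have lb: "b1 B k \<le> 1" if "k \<ge> 1" for k
    by (rule coef_le1[OF nnB spB that])
  show "0 \<le> a2 A k \<and> a2 A k \<le> 1" for k
    using nnA[of k] la[of k] by (cases "k = 0") (auto simp: a2_def)
  show "0 \<le> b1 B k \<and> b1 B k \<le> 1" for k
    using nnB[of k] lb[of k] by (cases "k = 0") (auto simp: b1_def)
qed

lemma SH_mono:
  assumes "SH \<alpha> \<beta> \<gamma> \<delta> p q m n \<eta> X Y" "\<rho> \<le> \<eta>"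
  shows "SH \<alpha> \<beta> \<gamma> \<delta> p q m n \<rho> X Y"
  using assms(1) unfolding SH_def
  apply (elim conjE)
  apply (intro conjI)
  apply assumption+
  using assms(2) by (meson le_less_trans)

theorem theorem4p1:
  fixes \<alpha> \<beta> \<gamma> \<delta> p q \<rho> \<eta> :: real and m n :: nat and a b A B :: "nat \<Rightarrow> real"
  assumes "\<alpha> > 0" "\<beta> > 0" "\<gamma> > 0" "\<delta> > 0" "p > 0" "q > 0" "q \<le> \<alpha> + p"
    and "0 \<le> \<rho>" "\<rho> \<le> \<eta>" "\<eta> < 1"
    and "m \<ge> 1" "m > n"
    and "SHbar \<alpha> \<beta> \<gamma> \<delta> p q m n \<eta> a b"
    and "SHbar \<alpha> \<beta> \<gamma> \<delta> p q m n \<rho> A B"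
  shows "SHbar \<alpha> \<beta> \<gamma> \<delta> p q m n \<eta> (\<lambda>k. a k * A k) (\<lambda>k. b k * B k) \<and>
    (\<forall>a' b'. SHbar \<alpha> \<beta> \<gamma> \<delta> p q m n \<eta> a' b' \<longrightarrow> SHbar \<alpha> \<beta> \<gamma> \<delta> p q m n \<rho> a' b')"
proof
  have pos: "\<alpha> > 0" "\<beta> > 0" "\<gamma> > 0" "\<delta> > 0" "p > 0" "q > 0" using assms by auto
  have eta0: "0 \<le> \<eta>" using assms by linarith
  note PF = le1_from_props[OF pos assms(8) assms(11) assms(14)]
  note Pf = props[OF pos eta0 assms(11) assms(13)]
  show "SHbar \<alpha> \<beta> \<gamma> \<delta> p q m n \<eta> (\<lambda>k. a k * A k) (\<lambda>k. b k * B k)"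
  proof (rule conv_main[OF pos eta0 assms(10) assms(11) _ assms(13)])
    show "n \<le> m" using assms by simp
    have ea: "a2 (\<lambda>k. a k * A k) k = a2 a k * a2 A k" for k by (simp add: a2_def)
    have eb: "b1 (\<lambda>k. b k * B k) k = b1 b k * b1 B k" for k by (simp add: b1_def)
    show "0 \<le> a2 (\<lambda>k. a k * A k) k" for k using Pf(1) PF(1)[of k] by (simp add: ea)
    show "a2 (\<lambda>k. a k * A k) k \<le> a2 a k" for k
      using Pf(1) PF(1)[of k] mult_left_mono[of "a2 A k" 1 "a2 a k"] by (simp add: ea)
    show "0 \<le> b1 (\<lambda>k. b k * B k) k" for k using Pf(2) PF(2)[of k] by (simp add: eb)
    show "b1 (\<lambda>k. b k * B k) k \<le> b1 b k" for k
      using Pf(2) PF(2)[of k] mult_left_mono[of "b1 B k" 1 "b1 b k"] by (simp add: eb)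
  qed
  show "\<forall>a' b'. SHbar \<alpha> \<beta> \<gamma> \<delta> p q m n \<eta> a' b' \<longrightarrow> SHbar \<alpha> \<beta> \<gamma> \<delta> p q m n \<rho> a' b'"
  proof (intro allI impI)
    fix a' b' assume "SHbar \<alpha> \<beta> \<gamma> \<delta> p q m n \<eta> a' b'"
    then show "SHbar \<alpha> \<beta> \<gamma> \<delta> p q m n \<rho> a' b'"
      unfolding SHbar_def using SH_mono[OF _ assms(9)] by blast
  qed
qed


end
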